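(* Let $M$ and $M'$ be matroids on disjoint ground sets. If at least one of $M$, $M'$ has the Borsuk property, then $M\oplus M'$ has the Borsuk property.
   Context: $M\oplus M'$ is the direct sum: ground set the disjoint union, bases the unions $B\cup B'$ with $B$ a basis of $M$ and $B'$ a basis of $M'$. For a matroid $M$, $\mathcal{B}(M)$ denotes its set of bases, and the distance between two bases $B,B'$ is $|B\triangle B'|$; $\operatorname{diam}$ denotes diameter. The Borsuk number $f(M)$ is the minimum number of parts in a partition of $\mathcal{B}(M)$ in which every part has diameter strictly smaller than $\operatorname{diam}(\mathcal{B}(M))$; if $M$ has exactly one basis, $f(M):=+\infty$. If $M$ has $n$ elements and $c$ connected components, $M$ has the Borsuk property if $f(M)\le n-c+1$. *)

theory Defs
  imports Main "HOL-Library.Disjoint_Sets" "HOL-Library.Extended_Nat"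
begin

definition matroid :: "'a set \<Rightarrow> 'a set set \<Rightarrow> bool" where
  "matroid E Bs \<longleftrightarrow> finite E \<and> Bs \<noteq> {} \<and> (\<forall>B\<in>Bs. B \<subseteq> E) \<and>
     (\<forall>B1\<in>Bs. \<forall>B2\<in>Bs. \<forall>x\<in>B1 - B2. \<exists>y\<in>B2 - B1. insert y (B1 - {x}) \<in> Bs)"

definition indep :: "'a set set \<Rightarrow> 'a set \<Rightarrow> bool" where
  "indep Bs X \<longleftrightarrow> (\<exists>B\<in>Bs. X \<subseteq> B)"

definition circuit :: "'a set \<Rightarrow> 'a set set \<Rightarrow> 'a set \<Rightarrow> bool" where
  "circuit E Bs C \<longleftrightarrow> C \<subseteq> E \<and> \<not> indep Bs C \<and> (\<forall>D. D \<subset> C \<longrightarrow> indep Bs D)"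

definition conn_rel :: "'a set \<Rightarrow> 'a set set \<Rightarrow> ('a \<times> 'a) set" where
  "conn_rel E Bs = {(e, f). e \<in> E \<and> f \<in> E \<and> (e = f \<or> (\<exists>C. circuit E Bs C \<and> e \<in> C \<and> f \<in> C))}"

definition num_components :: "'a set \<Rightarrow> 'a set set \<Rightarrow> nat" where
  "num_components E Bs = card (E // conn_rel E Bs)"

definition direct_sum_bases :: "'a set set \<Rightarrow> 'a set set \<Rightarrow> 'a set set" where
  "direct_sum_bases Bs Bs' = {B \<union> B' | B B'. B \<in> Bs \<and> B' \<in> Bs'}"

definition diam :: "'a set set \<Rightarrow> nat" where
  "diam S = Max {card (B - B' \<union> (B' - B)) | B B'. B \<in> S \<and> B' \<in> S}"

definition borsuk_number :: "'a set set \<Rightarrow> enat" where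
  "borsuk_number Bs = (if card Bs = 1 then \<infinity> else
     enat (LEAST k. \<exists>P. partition_on Bs P \<and> card P = k \<and> (\<forall>S\<in>P. diam S < diam Bs)))"

definition borsuk_property :: "'a set \<Rightarrow> 'a set set \<Rightarrow> bool" where
  "borsuk_property E Bs \<longleftrightarrow>
     borsuk_number Bs \<le> enat (card E - num_components E Bs + 1)"

end

theory Submission
  imports Defs
begin

lemma dsb_sym: "direct_sum_bases Bs Bs' = direct_sum_bases Bs' Bs"
  unfolding direct_sum_bases_def by (auto simp: Un_commute)

lemma dsb_finite: "finite S \<Longrightarrow> finite T \<Longrightarrow> finite (direct_sum_bases S T)"
  unfolding direct_sum_bases_def by (rule finite_image_set2) auto

lemma matroid_finite: "matroid E Bs \<Longrightarrow> finite Bs"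
  unfolding matroid_def by (meson Pow_iff finite_Pow_iff finite_subset subsetI)

lemma symdiff_split:
  assumes "E \<inter> E' = {}" "finite E" "finite E'" "B1 \<subseteq> E" "B2 \<subseteq> E" "C1 \<subseteq> E'" "C2 \<subseteq> E'"
  shows "card ((B1 \<union> C1) - (B2 \<union> C2) \<union> ((B2 \<union> C2) - (B1 \<union> C1)))
       = card (B1 - B2 \<union> (B2 - B1)) + card (C1 - C2 \<union> (C2 - C1))"
proof -
  have eq: "(B1 \<union> C1) - (B2 \<union> C2) \<union> ((B2 \<union> C2) - (B1 \<union> C1))
       = (B1 - B2 \<union> (B2 - B1)) \<union> (C1 - C2 \<union> (C2 - C1))" using assms by blast
  have f1: "finite (B1 - B2 \<union> (B2 - B1))" using assms finite_subset by blast
  have f2: "finite (C1 - C2 \<union> (C2 - C1))" using assms finite_subset by blast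
  have d: "(B1 - B2 \<union> (B2 - B1)) \<inter> (C1 - C2 \<union> (C2 - C1)) = {}" using assms by blast
  show ?thesis unfolding eq by (rule card_Un_disjoint[OF f1 f2 d])
qed

lemma diam_dsb:
  assumes "E \<inter> E' = {}" "finite E" "finite E'" "S \<subseteq> Pow E" "T \<subseteq> Pow E'" "S \<noteq> {}" "T \<noteq> {}"
  shows "diam (direct_sum_bases S T) = diam S + diam T"
proof -
  have fS: "finite S" using assms finite_subset by (metis finite_Pow_iff)
  have fT: "finite T" using assms finite_subset by (metis finite_Pow_iff)
  let ?A = "{card (B - B' \<union> (B' - B)) | B B'. B \<in> S \<and> B' \<in> S}"
  let ?B = "{card (B - B' \<union> (B' - B)) | B B'. B \<in> T \<and> B' \<in> T}"
  let ?C = "{card (B - B' \<union> (B' - B)) | B B'. B \<in> direct_sum_bases S T \<and> B' \<in> direct_sum_bases S T}"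
  have fA: "finite ?A" by (rule finite_image_set2) (use fS in auto)
  have fB: "finite ?B" by (rule finite_image_set2) (use fT in auto)
  have fC: "finite ?C" by (rule finite_image_set2) (use fS fT dsb_finite in auto)
  have neA: "?A \<noteq> {}" using assms(6) by blast
  have neB: "?B \<noteq> {}" using assms(7) by blast
  have "Max ?C = Max ?A + Max ?B"
  proof (rule Max_eqI[OF fC])
    fix y assume "y \<in> ?C"
    then obtain B1 B2 C1 C2 where b: "B1 \<in> S" "B2 \<in> S" "C1 \<in> T" "C2 \<in> T"
      and y: "y = card ((B1 \<union> C1) - (B2 \<union> C2) \<union> ((B2 \<union> C2) - (B1 \<union> C1)))"
      unfolding direct_sum_bases_def by blast
    have "y = card (B1 - B2 \<union> (B2 - B1)) + card (C1 - C2 \<union> (C2 - C1))"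
      unfolding y by (rule symdiff_split[OF assms(1-3)]) (use assms b in blast)+
    moreover have "card (B1 - B2 \<union> (B2 - B1)) \<le> Max ?A" by (rule Max_ge[OF fA]) (use b in blast)
    moreover have "card (C1 - C2 \<union> (C2 - C1)) \<le> Max ?B" by (rule Max_ge[OF fB]) (use b in blast)
    ultimately show "y \<le> Max ?A + Max ?B" by simp
  next
    obtain B1 B2 where b: "B1 \<in> S" "B2 \<in> S" "Max ?A = card (B1 - B2 \<union> (B2 - B1))"
      using Max_in[OF fA neA] by auto
    obtain C1 C2 where c: "C1 \<in> T" "C2 \<in> T" "Max ?B = card (C1 - C2 \<union> (C2 - C1))"
      using Max_in[OF fB neB] by auto
    have "Max ?A + Max ?B = card ((B1 \<union> C1) - (B2 \<union> C2) \<union> ((B2 \<union> C2) - (B1 \<union> C1)))"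
      unfolding b c by (rule symdiff_split[OF assms(1-3), symmetric]) (use assms b c in blast)+
    moreover have "B1 \<union> C1 \<in> direct_sum_bases S T" "B2 \<union> C2 \<in> direct_sum_bases S T"
      unfolding direct_sum_bases_def using b c by blast+
    ultimately show "Max ?A + Max ?B \<in> ?C" by blast
  qed
  then show ?thesis unfolding diam_def .
qed


lemma indep_dsb:
  assumes "E \<inter> E' = {}" "\<forall>B\<in>Bs. B \<subseteq> E" "\<forall>B\<in>Bs'. B \<subseteq> E'" "X \<subseteq> E \<union> E'"
  shows "indep (direct_sum_bases Bs Bs') X \<longleftrightarrow> indep Bs (X \<inter> E) \<and> indep Bs' (X \<inter> E')"
proof
  assume "indep (direct_sum_bases Bs Bs') X"
  then obtain B B' where b: "B \<in> Bs" "B' \<in> Bs'" "X \<subseteq> B \<union> B'"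
    unfolding indep_def direct_sum_bases_def by blast
  have s: "B \<subseteq> E" "B' \<subseteq> E'" using b(1,2) assms(2,3) by auto
  have "X \<inter> E \<subseteq> B" using b(3) s assms(1) by blast
  moreover have "X \<inter> E' \<subseteq> B'" using b(3) s assms(1) by blast
  ultimately show "indep Bs (X \<inter> E) \<and> indep Bs' (X \<inter> E')"
    unfolding indep_def using b(1,2) by blast
next
  assume "indep Bs (X \<inter> E) \<and> indep Bs' (X \<inter> E')"
  then obtain B B' where b: "B \<in> Bs" "B' \<in> Bs'" "X \<inter> E \<subseteq> B" "X \<inter> E' \<subseteq> B'"
    unfolding indep_def by blast
  have "B \<union> B' \<in> direct_sum_bases Bs Bs'"
    unfolding direct_sum_bases_def using b(1,2) by blast
  moreover have "X \<subseteq> B \<union> B'" using b(3,4) assms(4) by blast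
  ultimately show "indep (direct_sum_bases Bs Bs') X"
    unfolding indep_def by blast
qed

lemma circuit_dsb:
  assumes disj: "E \<inter> E' = {}" and sub: "\<forall>B\<in>Bs. B \<subseteq> E" "\<forall>B\<in>Bs'. B \<subseteq> E'"
    and ne: "Bs' \<noteq> {}"
    and C: "circuit (E \<union> E') (direct_sum_bases Bs Bs') C" and x: "x \<in> C" "x \<in> E"
  shows "C \<subseteq> E \<and> circuit E Bs C"
proof -
  have CE: "C \<subseteq> E \<union> E'" and nind: "\<not> indep (direct_sum_bases Bs Bs') C"
    and sb: "\<And>D. D \<subset> C \<Longrightarrow> indep (direct_sum_bases Bs Bs') D"
    using C unfolding circuit_def by auto
  have ie: "\<And>X. X \<subseteq> E \<union> E' \<Longrightarrow> indep (direct_sum_bases Bs Bs') X \<longleftrightarrow> indep Bs (X \<inter> E) \<and> indep Bs' (X \<inter> E')"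
    using indep_dsb[OF disj sub] by blast
  have e0: "indep Bs' {}" using ne unfolding indep_def by blast
  have CsE: "C \<subseteq> E"
  proof (rule ccontr)
    assume "\<not> C \<subseteq> E"
    then have "C \<inter> E \<subset> C" by blast
    then have "indep (direct_sum_bases Bs Bs') (C \<inter> E)" by (rule sb)
    moreover have "C \<inter> E \<subseteq> E \<union> E'" "C \<inter> E \<inter> E = C \<inter> E" by blast+
    ultimately have a: "indep Bs (C \<inter> E)" using ie by metis
    have "C \<inter> E' \<subset> C" using x disj by blast
    then have "indep (direct_sum_bases Bs Bs') (C \<inter> E')" by (rule sb)
    moreover have "C \<inter> E' \<subseteq> E \<union> E'" "C \<inter> E' \<inter> E' = C \<inter> E'" by blast+
    ultimately have b: "indep Bs' (C \<inter> E')" using ie by metis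
    from a b have "indep (direct_sum_bases Bs Bs') C" using ie[OF CE] by simp
    with nind show False by simp
  qed
  have "\<not> indep Bs C"
  proof
    assume "indep Bs C"
    moreover have "C \<inter> E = C" "C \<inter> E' = {}" using CsE disj by blast+
    ultimately have "indep (direct_sum_bases Bs Bs') C" using ie[OF CE] e0 by simp
    with nind show False by simp
  qed
  moreover have "indep Bs D" if "D \<subset> C" for D
  proof -
    have "indep (direct_sum_bases Bs Bs') D" using sb that .
    moreover have "D \<subseteq> E \<union> E'" "D \<inter> E = D" using that CsE by blast+
    ultimately show ?thesis using ie by metis
  qed
  ultimately show ?thesis using CsE unfolding circuit_def by blast
qed

lemma circuit_dsb2:
  assumes disj: "E \<inter> E' = {}" and sub: "\<forall>B\<in>Bs. B \<subseteq> E" "\<forall>B\<in>Bs'. B \<subseteq> E'"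
    and ne: "Bs' \<noteq> {}"
    and C: "circuit E Bs C"
  shows "circuit (E \<union> E') (direct_sum_bases Bs Bs') C"
proof -
  have CE: "C \<subseteq> E" and nind: "\<not> indep Bs C" and sb: "\<And>D. D \<subset> C \<Longrightarrow> indep Bs D"
    using C unfolding circuit_def by auto
  have ie: "\<And>X. X \<subseteq> E \<union> E' \<Longrightarrow> indep (direct_sum_bases Bs Bs') X \<longleftrightarrow> indep Bs (X \<inter> E) \<and> indep Bs' (X \<inter> E')"
    using indep_dsb[OF disj sub] by blast
  have e0: "indep Bs' {}" using ne unfolding indep_def by blast
  have "\<not> indep (direct_sum_bases Bs Bs') C"
  proof
    assume "indep (direct_sum_bases Bs Bs') C"
    moreover have "C \<subseteq> E \<union> E'" "C \<inter> E = C" using CE by blast+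
    ultimately show False using ie nind by metis
  qed
  moreover have "indep (direct_sum_bases Bs Bs') D" if "D \<subset> C" for D
  proof -
    have "D \<subseteq> E \<union> E'" "D \<inter> E = D" "D \<inter> E' = {}" using that CE disj by blast+
    then show ?thesis using ie sb[OF that] e0 by simp
  qed
  ultimately show ?thesis using CE unfolding circuit_def by blast
qed

lemma conn_image_dsb:
  assumes disj: "E \<inter> E' = {}" and sub: "\<forall>B\<in>Bs. B \<subseteq> E" "\<forall>B\<in>Bs'. B \<subseteq> E'"
    and ne: "Bs' \<noteq> {}" and x: "x \<in> E"
  shows "conn_rel (E \<union> E') (direct_sum_bases Bs Bs') `` {x} = conn_rel E Bs `` {x}"
proof
  show "conn_rel (E \<union> E') (direct_sum_bases Bs Bs') `` {x} \<subseteq> conn_rel E Bs `` {x}"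
  proof
    fix f assume "f \<in> conn_rel (E \<union> E') (direct_sum_bases Bs Bs') `` {x}"
    then have f: "f \<in> E \<union> E'" and h: "x = f \<or> (\<exists>C. circuit (E \<union> E') (direct_sum_bases Bs Bs') C \<and> x \<in> C \<and> f \<in> C)"
      unfolding conn_rel_def by auto
    from h show "f \<in> conn_rel E Bs `` {x}"
    proof
      assume "x = f" then show ?thesis using x unfolding conn_rel_def by auto
    next
      assume "\<exists>C. circuit (E \<union> E') (direct_sum_bases Bs Bs') C \<and> x \<in> C \<and> f \<in> C"
      then obtain C where C: "circuit (E \<union> E') (direct_sum_bases Bs Bs') C" "x \<in> C" "f \<in> C" by blast
      from circuit_dsb[OF disj sub ne C(1) C(2) x] have "C \<subseteq> E" "circuit E Bs C" by auto
      then show ?thesis using x C unfolding conn_rel_def by auto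
    qed
  qed
next
  show "conn_rel E Bs `` {x} \<subseteq> conn_rel (E \<union> E') (direct_sum_bases Bs Bs') `` {x}"
    using circuit_dsb2[OF disj sub ne] unfolding conn_rel_def by auto
qed

lemma quot_image: "A // r = (\<lambda>x. r `` {x}) ` A" unfolding quotient_def by auto

lemma card_quotient_le: "finite A \<Longrightarrow> card (A // r) \<le> card A"
proof -
  assume "finite A"
  have "A // r = (\<lambda>x. r `` {x}) ` A" unfolding quotient_def by auto
  then show ?thesis using card_image_le[OF \<open>finite A\<close>] by simp
qed

lemma num_comp_dsb:
  assumes disj: "E \<inter> E' = {}" and sub: "\<forall>B\<in>Bs. B \<subseteq> E" "\<forall>B\<in>Bs'. B \<subseteq> E'"
    and ne: "Bs' \<noteq> {}" and fin: "finite E" "finite E'"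
  shows "num_components (E \<union> E') (direct_sum_bases Bs Bs') \<le> num_components E Bs + card E'"
proof -
  let ?R = "conn_rel (E \<union> E') (direct_sum_bases Bs Bs')"
  have "(E \<union> E') // ?R = E // ?R \<union> E' // ?R" unfolding quotient_def by blast
  moreover have "E // ?R = E // conn_rel E Bs"
    unfolding quot_image by (rule image_cong) (simp_all add: conn_image_dsb[OF disj sub ne])
  ultimately have "(E \<union> E') // ?R = E // conn_rel E Bs \<union> E' // ?R" by simp
  then have "card ((E \<union> E') // ?R) \<le> card (E // conn_rel E Bs) + card (E' // ?R)"
    by (simp add: card_Un_le)
  also have "\<dots> \<le> card (E // conn_rel E Bs) + card E'"
    using card_quotient_le[OF fin(2)] by simp
  finally show ?thesis unfolding num_components_def .
qed


lemma borsuk_dsb: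
  assumes M: "matroid E Bs" and M': "matroid E' Bs'" and disj: "E \<inter> E' = {}"
    and bp: "borsuk_property E Bs"
  shows "borsuk_property (E \<union> E') (direct_sum_bases Bs Bs')"
proof -
  have finE: "finite E" and neB: "Bs \<noteq> {}" and subB: "\<forall>B\<in>Bs. B \<subseteq> E"
    using M unfolding matroid_def by auto
  have finE': "finite E'" and neB': "Bs' \<noteq> {}" and subB': "\<forall>B\<in>Bs'. B \<subseteq> E'"
    using M' unfolding matroid_def by auto
  have finB: "finite Bs" "finite Bs'" using matroid_finite M M' by auto
  have powB: "Bs \<subseteq> Pow E" "Bs' \<subseteq> Pow E'" using subB subB' by auto
  define k where "k = card E - num_components E Bs + 1"
  have bn: "borsuk_number Bs \<le> enat k" using bp unfolding borsuk_property_def k_def .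
  have c1: "card Bs \<noteq> 1"
  proof
    assume "card Bs = 1"
    then have "borsuk_number Bs = \<infinity>" unfolding borsuk_number_def by simp
    with bn show False by simp
  qed
  obtain B1 where B1: "B1 \<in> Bs" using neB by blast
  have "Bs \<noteq> {B1}" using c1 by auto
  then obtain B2 where B2: "B2 \<in> Bs" "B2 \<noteq> B1" using B1 by blast
  have finDS: "finite {card (B - B' \<union> (B' - B)) | B B'. B \<in> Bs \<and> B' \<in> Bs}"
    by (rule finite_image_set2) (use finB in auto)
  have "0 < card (B1 - B2 \<union> (B2 - B1))"
  proof -
    have "finite (B1 - B2 \<union> (B2 - B1))" using B1 B2 subB finE finite_subset by blast
    moreover have "B1 - B2 \<union> (B2 - B1) \<noteq> {}" using B2(2) by blast
    ultimately show ?thesis by (simp add: card_gt_0_iff)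
  qed
  also have "card (B1 - B2 \<union> (B2 - B1)) \<le> diam Bs"
    unfolding diam_def by (rule Max_ge[OF finDS]) (use B1 B2 in blast)
  finally have dpos: "0 < diam Bs" .
  have diam1: "diam {B} = 0" for B :: "'a set"
  proof -
    have "{card (X - Y \<union> (Y - X)) | X Y. X \<in> {B} \<and> Y \<in> {B}} = {0}" by auto
    then show ?thesis unfolding diam_def by simp
  qed
  have ex: "\<exists>j P. partition_on Bs P \<and> card P = j \<and> (\<forall>S\<in>P. diam S < diam Bs)"
  proof (intro exI conjI)
    show "partition_on Bs ((\<lambda>x. {x}) ` Bs)" by (rule partition_on_singletons)
    show "\<forall>S\<in>(\<lambda>x. {x}) ` Bs. diam S < diam Bs" using diam1 dpos by auto
  qed (rule refl)
  define m where "m = (LEAST j. \<exists>P. partition_on Bs P \<and> card P = j \<and> (\<forall>S\<in>P. diam S < diam Bs))"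
  from LeastI_ex[OF ex] obtain P0 where P0: "partition_on Bs P0" "card P0 = m" "\<forall>S\<in>P0. diam S < diam Bs"
    unfolding m_def by blast
  have "borsuk_number Bs = enat m" unfolding borsuk_number_def m_def using c1 by simp
  with bn have mk: "m \<le> k" by simp
  have UP0: "\<Union>P0 = Bs" using P0(1) partition_onD1 by blast
  have finP0: "finite P0" using UP0 finB(1) by (metis finite_UnionD)
  let ?D = "direct_sum_bases Bs Bs'"
  obtain B' where B': "B' \<in> Bs'" using neB' by blast
  have capE: "(A \<union> C) \<inter> E = A" if "A \<in> Bs" "C \<in> Bs'" for A C
  proof -
    have "A \<subseteq> E" "C \<subseteq> E'" using that subB subB' by auto
    then show ?thesis using disj by blast
  qed
  have cD: "card ?D \<noteq> 1"
  proof
    assume "card ?D = 1"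
    then obtain a where a: "?D = {a}" by (rule card_1_singletonE)
    have "B1 \<union> B' \<in> ?D" "B2 \<union> B' \<in> ?D" unfolding direct_sum_bases_def using B1 B2 B' by blast+
    then have "B1 \<union> B' \<in> {a}" "B2 \<union> B' \<in> {a}" unfolding a .
    then have "B1 \<union> B' = B2 \<union> B'" by simp
    then have "(B1 \<union> B') \<inter> E = (B2 \<union> B') \<inter> E" by simp
    then show False using capE B1 B2 B' by simp
  qed
  define Q where "Q = (\<lambda>S. direct_sum_bases S Bs') ` P0"
  have PQ: "partition_on ?D Q"
  proof (rule partition_onI)
    show "\<Union>Q = ?D"
    proof
      show "\<Union>Q \<subseteq> ?D"
      proof
        fix X assume "X \<in> \<Union>Q"
        then obtain S where S: "S \<in> P0" "X \<in> direct_sum_bases S Bs'" unfolding Q_def by blast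
        then obtain A C where AC: "X = A \<union> C" "A \<in> S" "C \<in> Bs'"
          unfolding direct_sum_bases_def by blast
        have "A \<in> Bs" using AC(2) S(1) UP0 by blast
        then show "X \<in> ?D" unfolding direct_sum_bases_def using AC by blast
      qed
      show "?D \<subseteq> \<Union>Q"
      proof
        fix X assume "X \<in> ?D"
        then obtain A C where AC: "X = A \<union> C" "A \<in> Bs" "C \<in> Bs'"
          unfolding direct_sum_bases_def by blast
        then obtain S where S: "S \<in> P0" "A \<in> S" using UP0 by blast
        have "X \<in> direct_sum_bases S Bs'" unfolding direct_sum_bases_def using AC S by blast
        then show "X \<in> \<Union>Q" unfolding Q_def using S(1) by blast
      qed
    qed
  next
    fix p q assume pq: "p \<in> Q" "q \<in> Q" "p \<noteq> q"
    then obtain S1 S2 where S: "S1 \<in> P0" "S2 \<in> P0" "p = direct_sum_bases S1 Bs'" "q = direct_sum_bases S2 Bs'"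
      unfolding Q_def by blast
    then have "S1 \<noteq> S2" using pq by blast
    then have dj: "disjnt S1 S2" using P0(1) S(1,2) unfolding partition_on_def pairwise_def by blast
    show "disjnt p q" unfolding disjnt_def
    proof (rule ccontr)
      assume "p \<inter> q \<noteq> {}"
      then obtain A1 C1 A2 C2 where h: "A1 \<in> S1" "C1 \<in> Bs'" "A2 \<in> S2" "C2 \<in> Bs'" "A1 \<union> C1 = A2 \<union> C2"
        unfolding S direct_sum_bases_def by blast
      have "A1 \<in> Bs" "A2 \<in> Bs" using h(1,3) S(1,2) UP0 by blast+
      then have "A1 = A2" using capE h by metis
      then show False using dj h(1,3) unfolding disjnt_def by blast
    qed
  next
    show "{} \<notin> Q"
    proof
      assume "{} \<in> Q"
      then obtain S where S: "S \<in> P0" "direct_sum_bases S Bs' = {}" unfolding Q_def by blast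
      have "S \<noteq> {}" using P0(1) S(1) partition_onD3 by blast
      then obtain A where "A \<in> S" by blast
      then have "A \<union> B' \<in> direct_sum_bases S Bs'" unfolding direct_sum_bases_def using B' by blast
      then show False using S by simp
    qed
  qed
  have cardQ: "card Q \<le> m" unfolding Q_def using card_image_le[OF finP0] P0(2) by simp
  have diamD: "diam ?D = diam Bs + diam Bs'"
    by (rule diam_dsb[OF disj finE finE' powB neB neB'])
  have dQ: "\<forall>T\<in>Q. diam T < diam ?D"
  proof
    fix T assume "T \<in> Q"
    then obtain S where S: "S \<in> P0" "T = direct_sum_bases S Bs'" unfolding Q_def by blast
    have "S \<noteq> {}" using P0(1) S(1) partition_onD3 by blast
    moreover have "S \<subseteq> Pow E" using S(1) UP0 powB by blast
    ultimately have "diam T = diam S + diam Bs'" unfolding S(2)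
      by (intro diam_dsb[OF disj finE finE' _ powB(2) _ neB'])
    then show "diam T < diam ?D" using P0(3) S(1) diamD by simp
  qed
  have "(LEAST j. \<exists>P. partition_on ?D P \<and> card P = j \<and> (\<forall>S\<in>P. diam S < diam ?D)) \<le> card Q"
    by (rule Least_le) (use PQ dQ in blast)
  then have bD: "borsuk_number ?D \<le> enat m" unfolding borsuk_number_def using cD cardQ by simp
  have nc: "num_components (E \<union> E') ?D \<le> num_components E Bs + card E'"
    by (rule num_comp_dsb[OF disj subB subB' neB' finE finE'])
  have ncE: "num_components E Bs \<le> card E" unfolding num_components_def
    by (rule card_quotient_le[OF finE])
  have cU: "card (E \<union> E') = card E + card E'" by (rule card_Un_disjoint[OF finE finE' disj])
  have "k \<le> card (E \<union> E') - num_components (E \<union> E') ?D + 1"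
    unfolding k_def cU using nc ncE by linarith
  with mk bD show ?thesis unfolding borsuk_property_def
    by (meson enat_ord_simps(1) order_trans)
qed

theorem corollary4p3:
  assumes "matroid E Bs" and "matroid E' Bs'" and "E \<inter> E' = {}"
    and "borsuk_property E Bs \<or> borsuk_property E' Bs'"
  shows "borsuk_property (E \<union> E') (direct_sum_bases Bs Bs')"
  using assms(4)
proof
  assume "borsuk_property E Bs"
  then show ?thesis using borsuk_dsb assms(1-3) by blast
next
  assume "borsuk_property E' Bs'"
  then have "borsuk_property (E' \<union> E) (direct_sum_bases Bs' Bs)"
    using borsuk_dsb assms(1-3) by (metis inf_commute)
  then show ?thesis by (simp add: Un_commute dsb_sym)
qed

end
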